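(* Let $G$ be a simple graph with at least one edge, with largest Laplacian eigenvalue $\mu_1$. Then the largest $\mathcal{H}$-eigenvalue $\lambda_1$ of $G$ satisfies $\lambda_1\le\max\{\mu_1,\,3\max_{e\in E(G)}\triangle(e)\}$.
   Context: For an oriented edge $e$ write $e^-$ for its tail and $e^+$ for its head. For distinct edges $e,e'$: $e\leftrightarrow e'$ means $e^+=e'^-$ or $e'^+=e^-$; $e\overset{\pm}{\sim}e'$ means $e^+=e'^+$ or $e^-=e'^-$; $e\vartriangle e'$ means $e,e'$ are two edges of a common triangle. $\triangle(e)$ is the number of triangles of $G$ containing $e$. The Helmholtzian matrix $\mathcal{H}(G)=(h_{ee'})$ is indexed by edges, with $h_{ee}=\triangle(e)+2$, and for $e\ne e'$: $h_{ee'}=-1$ if $e\leftrightarrow e'$ and not $e\vartriangle e'$; $h_{ee'}=1$ if $e\overset{\pm}{\sim}e'$ and not $e\vartriangle e'$; $h_{ee'}=0$ otherwise. The $\mathcal{H}$-eigenvalues are the eigenvalues of $\mathcal{H}(G)$ for an arbitrary orientation (independent of the orientation). The Laplacian matrix is $L(G)=D(G)-A(G)$. *)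

theory Defs
  imports Complex_Main
begin

definition simple_graph :: "'a set \<Rightarrow> 'a set set \<Rightarrow> bool" where
  "simple_graph V E \<longleftrightarrow> finite V \<and> (\<forall>e\<in>E. e \<subseteq> V \<and> card e = 2)"

definition degree :: "'a set set \<Rightarrow> 'a \<Rightarrow> nat" where
  "degree E v = card {e\<in>E. v \<in> e}"

definition laplacian :: "'a set set \<Rightarrow> 'a \<Rightarrow> 'a \<Rightarrow> real" where
  "laplacian E u v = (if u = v then real (degree E u) else if {u, v} \<in> E then -1 else 0)"

definition is_triangle :: "'a set \<Rightarrow> 'a set set \<Rightarrow> 'a set \<Rightarrow> bool" where
  "is_triangle V E T \<longleftrightarrow> T \<subseteq> V \<and> card T = 3 \<and> (\<forall>x\<in>T. \<forall>y\<in>T. x \<noteq> y \<longrightarrow> {x, y} \<in> E)"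

definition tri :: "'a set \<Rightarrow> 'a set set \<Rightarrow> 'a set \<Rightarrow> nat" where
  "tri V E e = card {T. is_triangle V E T \<and> e \<subseteq> T}"

text \<open>Oriented edges are pairs (tail, head); und gives the underlying edge.\<close>
definition und :: "'a \<times> 'a \<Rightarrow> 'a set" where
  "und e = {fst e, snd e}"

definition orientation :: "'a set set \<Rightarrow> ('a \<times> 'a) set \<Rightarrow> bool" where
  "orientation E Or \<longleftrightarrow> (\<forall>e\<in>Or. und e \<in> E) \<and>
     (\<forall>e\<in>E. \<exists>!p. p \<in> Or \<and> und p = e)"

definition head_tail :: "'a \<times> 'a \<Rightarrow> 'a \<times> 'a \<Rightarrow> bool" where
  "head_tail e e' \<longleftrightarrow> snd e = fst e' \<or> snd e' = fst e"

definition same_end :: "'a \<times> 'a \<Rightarrow> 'a \<times> 'a \<Rightarrow> bool" where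
  "same_end e e' \<longleftrightarrow> snd e = snd e' \<or> fst e = fst e'"

definition in_common_triangle :: "'a set \<Rightarrow> 'a set set \<Rightarrow> 'a \<times> 'a \<Rightarrow> 'a \<times> 'a \<Rightarrow> bool" where
  "in_common_triangle V E e e' \<longleftrightarrow>
     (\<exists>T. is_triangle V E T \<and> und e \<subseteq> T \<and> und e' \<subseteq> T)"

definition helmholtzian :: "'a set \<Rightarrow> 'a set set \<Rightarrow> 'a \<times> 'a \<Rightarrow> 'a \<times> 'a \<Rightarrow> real" where
  "helmholtzian V E e e' =
     (if e = e' then real (tri V E (und e)) + 2
      else if head_tail e e' \<and> \<not> in_common_triangle V E e e' then -1
      else if same_end e e' \<and> \<not> in_common_triangle V E e e' then 1
      else 0)"

definition eigenvalue_on :: "'i set \<Rightarrow> ('i \<Rightarrow> 'i \<Rightarrow> real) \<Rightarrow> real \<Rightarrow> bool" where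
  "eigenvalue_on I M lam \<longleftrightarrow>
     (\<exists>x :: 'i \<Rightarrow> real. (\<exists>i\<in>I. x i \<noteq> 0) \<and>
        (\<forall>i\<in>I. (\<Sum>j\<in>I. M i j * x j) = lam * x i))"

definition largest_eigenvalue :: "'i set \<Rightarrow> ('i \<Rightarrow> 'i \<Rightarrow> real) \<Rightarrow> real" where
  "largest_eigenvalue I M = Max {lam. eigenvalue_on I M lam}"

end

theory Submission
  imports Defs "Jordan_Normal_Form.Spectral_Radius"
begin


definition ev_gen :: "'i set \<Rightarrow> ('i \<Rightarrow> 'i \<Rightarrow> 'b::field) \<Rightarrow> 'b \<Rightarrow> bool" where
 "ev_gen I M k \<longleftrightarrow> (\<exists>x. (\<exists>i\<in>I. x i \<noteq> 0) \<and> (\<forall>i\<in>I. (\<Sum>j\<in>I. M i j * x j) = k * x i))"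

lemma ev_gen_mat:
  fixes M :: "'i \<Rightarrow> 'i \<Rightarrow> 'b::field"
  assumes h: "bij_betw h {0..<n} I"
  shows "ev_gen I M k \<longleftrightarrow> eigenvalue (mat n n (\<lambda>(i,j). M (h i) (h j))) k"
proof
  let ?A = "mat n n (\<lambda>(i,j). M (h i) (h j))"
  have sumI: "(\<Sum>j\<in>I. g j) = (\<Sum>s\<in>{0..<n}. g (h s))" for g :: "'i \<Rightarrow> 'b"
    using sum.reindex_bij_betw[OF h, of g] by simp
  have mv: "(?A *\<^sub>v v) $ s = (\<Sum>t\<in>{0..<n}. M (h s) (h t) * v $ t)" if "s < n" "dim_vec v = n" for v s
    using that by (auto simp: scalar_prod_def intro!: sum.cong)
  {
    assume "ev_gen I M k"
    then obtain x where x1: "\<exists>i\<in>I. x i \<noteq> 0" and x2: "\<forall>i\<in>I. (\<Sum>j\<in>I. M i j * x j) = k * x i"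
      unfolding ev_gen_def by blast
    define v where "v = vec n (\<lambda>s. x (h s))"
    from x1 obtain i where "i \<in> I" "x i \<noteq> 0" by blast
    then obtain s where s: "s < n" "h s = i" using h unfolding bij_betw_def by auto
    have "v \<noteq> 0\<^sub>v n"
    proof
      assume "v = 0\<^sub>v n"
      hence "v $ s = 0" using s by simp
      thus False using s \<open>x i \<noteq> 0\<close> by (simp add: v_def)
    qed
    moreover have "?A *\<^sub>v v = k \<cdot>\<^sub>v v"
    proof (rule eq_vecI)
      fix s assume "s < dim_vec (k \<cdot>\<^sub>v v)"
      hence s: "s < n" by (simp add: v_def)
      have hs: "h s \<in> I" using h s unfolding bij_betw_def by auto
      have "(?A *\<^sub>v v) $ s = (\<Sum>t\<in>{0..<n}. M (h s) (h t) * v $ t)"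
        by (rule mv) (simp_all add: s v_def)
      also have "\<dots> = (\<Sum>t\<in>{0..<n}. M (h s) (h t) * x (h t))"
        by (rule sum.cong) (simp_all add: v_def)
      also have "\<dots> = (\<Sum>j\<in>I. M (h s) j * x j)" by (simp add: sumI)
      also have "\<dots> = k * x (h s)" using x2 hs by blast
      finally show "(?A *\<^sub>v v) $ s = (k \<cdot>\<^sub>v v) $ s" using s by (simp add: v_def)
    qed (simp add: v_def)
    ultimately show "eigenvalue ?A k"
      unfolding eigenvalue_def eigenvector_def
      by (intro exI[of _ v]) (auto simp: v_def)
  }
  {
    assume "eigenvalue ?A k"
    then obtain v where v: "v \<in> carrier_vec n" "v \<noteq> 0\<^sub>v n" "?A *\<^sub>v v = k \<cdot>\<^sub>v v"
      unfolding eigenvalue_def eigenvector_def by auto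
    define g where "g = the_inv_into {0..<n} h"
    have gh: "g (h s) = s" if "s < n" for s
      using h that unfolding g_def bij_betw_def by (simp add: the_inv_into_f_f)
    define x where "x j = v $ g j" for j
    have "\<exists>s<n. v $ s \<noteq> 0"
    proof (rule ccontr)
      assume "\<not> ?thesis"
      hence "v = 0\<^sub>v n" using v(1) by (intro eq_vecI) auto
      thus False using v(2) by simp
    qed
    then obtain s where s: "s < n" "v $ s \<noteq> 0" by blast
    have "\<exists>i\<in>I. x i \<noteq> 0"
      using s h gh unfolding bij_betw_def x_def by (intro bexI[of _ "h s"]) auto
    moreover have "\<forall>i\<in>I. (\<Sum>j\<in>I. M i j * x j) = k * x i"
    proof
      fix i assume "i \<in> I"
      then obtain s where s: "s < n" "h s = i" using h unfolding bij_betw_def by auto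
      have "(\<Sum>j\<in>I. M i j * x j) = (\<Sum>t\<in>{0..<n}. M (h s) (h t) * v $ t)"
        using s gh by (simp add: sumI x_def)
      also have "\<dots> = (?A *\<^sub>v v) $ s" using s v(1) by (subst mv) auto
      also have "\<dots> = k * v $ s" using v s by simp
      finally show "(\<Sum>j\<in>I. M i j * x j) = k * x i" using s gh[of s] by (simp add: x_def)
    qed
    ultimately show "ev_gen I M k" unfolding ev_gen_def by blast
  }
qed

lemma ev_finite:
  fixes M :: "'i \<Rightarrow> 'i \<Rightarrow> 'b::field"
  assumes "finite I"
  shows "finite {k. ev_gen I M k}"
proof -
  obtain h where h: "bij_betw h {0..<card I} I" using ex_bij_betw_nat_finite[OF assms] by blast
  let ?A = "mat (card I) (card I) (\<lambda>(i,j). M (h i) (h j))"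
  have A: "?A \<in> carrier_mat (card I) (card I)" by simp
  have "{k. ev_gen I M k} = {k. poly (char_poly ?A) k = 0}"
    using ev_gen_mat[OF h] eigenvalue_root_char_poly[OF A] by auto
  moreover have "char_poly ?A \<noteq> 0"
    using degree_monic_char_poly[OF A] by auto
  ultimately show ?thesis using poly_roots_finite by simp
qed

lemma eigenvalue_on_ev_gen: "eigenvalue_on I M k = ev_gen I M k"
  unfolding eigenvalue_on_def ev_gen_def by simp

lemma ev_exists:
  fixes M :: "'i \<Rightarrow> 'i \<Rightarrow> real"
  assumes fin: "finite I" and ne: "I \<noteq> {}" and sym: "\<And>i j. i \<in> I \<Longrightarrow> j \<in> I \<Longrightarrow> M i j = M j i"
  shows "\<exists>k. eigenvalue_on I M k"
proof -
  obtain h where h: "bij_betw h {0..<card I} I" using ex_bij_betw_nat_finite[OF fin] by blast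
  let ?M = "\<lambda>i j. complex_of_real (M i j)"
  let ?A = "mat (card I) (card I) (\<lambda>(i,j). ?M (h i) (h j))"
  have A: "?A \<in> carrier_mat (card I) (card I)" by simp
  have "card I > 0" using fin ne by (simp add: card_gt_0_iff)
  from spectrum_non_empty[OF A this] obtain k where "eigenvalue ?A k"
    unfolding spectrum_def by auto
  hence "ev_gen I ?M k" using ev_gen_mat[OF h] by blast
  then obtain x where x1: "\<exists>i\<in>I. x i \<noteq> 0" and x2: "\<And>i. i\<in>I \<Longrightarrow> (\<Sum>j\<in>I. ?M i j * x j) = k * x i"
    unfolding ev_gen_def by blast
  define S where "S = (\<Sum>i\<in>I. cnj (x i) * (\<Sum>j\<in>I. ?M i j * x j))"
  define N where "N = (\<Sum>i\<in>I. cnj (x i) * x i)"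
  have "S = (\<Sum>i\<in>I. cnj (x i) * (k * x i))" unfolding S_def
    by (rule sum.cong) (simp_all add: x2)
  hence SN: "S = k * N" unfolding N_def
    by (simp add: sum_distrib_left mult.commute mult.left_commute)
  have "cnj S = (\<Sum>i\<in>I. x i * (\<Sum>j\<in>I. ?M i j * cnj (x j)))"
    unfolding S_def by (simp add: cnj_sum)
  also have "\<dots> = (\<Sum>i\<in>I. \<Sum>j\<in>I. x i * (?M i j * cnj (x j)))"
    by (simp add: sum_distrib_left)
  also have "\<dots> = (\<Sum>j\<in>I. \<Sum>i\<in>I. x i * (?M i j * cnj (x j)))" by (rule sum.swap)
  also have "\<dots> = (\<Sum>j\<in>I. \<Sum>i\<in>I. cnj (x j) * (?M j i * x i))"
  proof (rule sum.cong[OF refl], rule sum.cong[OF refl])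
    fix j i assume "j \<in> I" "i \<in> I"
    thus "x i * (?M i j * cnj (x j)) = cnj (x j) * (?M j i * x i)"
      using sym[of i j] by (simp add: algebra_simps)
  qed
  also have "\<dots> = S" unfolding S_def by (simp add: sum_distrib_left)
  finally have cS: "cnj S = S" .
  define R where "R = (\<Sum>i\<in>I. (cmod (x i))^2)"
  have N_real: "N = complex_of_real R"
    unfolding N_def R_def of_real_sum by (rule sum.cong) (simp_all add: complex_norm_square[symmetric] mult.commute del: of_real_power)
  obtain i0 where i0: "i0 \<in> I" "x i0 \<noteq> 0" using x1 by blast
  have "R > 0"
  proof -
    have "R \<ge> (cmod (x i0))^2"
      unfolding R_def using i0 fin by (intro member_le_sum) auto
    moreover have "(cmod (x i0))^2 > 0" using i0 by simp
    ultimately show ?thesis by linarith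
  qed
  hence N0: "N \<noteq> 0" using N_real by simp
  have cN: "cnj N = N" using N_real by simp
  have "cnj k * N = cnj k * cnj N" using cN by simp
  also have "\<dots> = cnj S" using SN by simp
  also have "\<dots> = k * N" using cS SN by simp
  finally have "cnj k * N = k * N" .
  hence ck: "cnj k = k" using N0 by simp
  have "Im (cnj k) = Im k" using ck by simp
  hence imk: "Im k = 0" by simp
  define r where "r = Re k"
  have kr: "k = complex_of_real r" using imk unfolding r_def by (simp add: complex_eq_iff)
  have re: "(\<Sum>j\<in>I. M i j * Re (x j)) = r * Re (x i)" if "i \<in> I" for i
  proof -
    have "(\<Sum>j\<in>I. M i j * Re (x j)) = Re (\<Sum>j\<in>I. ?M i j * x j)" by (simp add: Re_sum)
    also have "\<dots> = Re (k * x i)" using x2[OF that] by simp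
    also have "\<dots> = r * Re (x i)" by (simp add: kr)
    finally show ?thesis .
  qed
  have im: "(\<Sum>j\<in>I. M i j * Im (x j)) = r * Im (x i)" if "i \<in> I" for i
  proof -
    have "(\<Sum>j\<in>I. M i j * Im (x j)) = Im (\<Sum>j\<in>I. ?M i j * x j)" by (simp add: Im_sum)
    also have "\<dots> = Im (k * x i)" using x2[OF that] by simp
    also have "\<dots> = r * Im (x i)" by (simp add: kr)
    finally show ?thesis .
  qed
  show ?thesis
  proof (cases "Re (x i0) = 0")
    case True
    hence "Im (x i0) \<noteq> 0" using i0 by (simp add: complex_eq_iff)
    hence "eigenvalue_on I M r" unfolding eigenvalue_on_def
      by (intro exI[of _ "\<lambda>j. Im (x j)"] conjI bexI[of _ i0] ballI im) (use i0 in auto)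
    thus ?thesis ..
  next
    case False
    hence "eigenvalue_on I M r" unfolding eigenvalue_on_def
      by (intro exI[of _ "\<lambda>j. Re (x j)"] conjI bexI[of _ i0] ballI re) (use i0 in auto)
    thus ?thesis ..
  qed
qed



locale hg =
  fixes V :: "'a set" and E :: "'a set set" and Or :: "('a \<times> 'a) set"
  assumes sg: "simple_graph V E" and ori: "orientation E Or"
begin

lemma finV: "finite V" using sg unfolding simple_graph_def by auto
lemma E_sub: "e \<in> E \<Longrightarrow> e \<subseteq> V" using sg unfolding simple_graph_def by auto
lemma E_card: "e \<in> E \<Longrightarrow> card e = 2" using sg unfolding simple_graph_def by auto
lemma finE: "finite E"
proof -
  have "E \<subseteq> Pow V" using E_sub by auto
  thus ?thesis using finV by (meson finite_Pow_iff rev_finite_subset)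
qed
lemma edge_ne: "{u,w} \<in> E \<Longrightarrow> u \<noteq> w" using E_card by fastforce
lemma edge_V: "{u,w} \<in> E \<Longrightarrow> u \<in> V \<and> w \<in> V" using E_sub by auto
lemma Or_E: "(u,w) \<in> Or \<Longrightarrow> {u,w} \<in> E" using ori unfolding orientation_def und_def by force
lemma Or_uniq: "e \<in> Or \<Longrightarrow> e' \<in> Or \<Longrightarrow> und e = und e' \<Longrightarrow> e = e'"
  using ori unfolding orientation_def by metis
lemma Or_und: "e \<in> Or \<Longrightarrow> und e \<in> E" using ori unfolding orientation_def by blast
lemma single_notE: "{v} \<notin> E" using edge_ne[of v v] by auto
lemma Or_ne: "(u,w) \<in> Or \<Longrightarrow> u \<noteq> w" using Or_E edge_ne by blast
lemma Or_V: "(u,w) \<in> Or \<Longrightarrow> u \<in> V \<and> w \<in> V" using Or_E edge_V by blast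
lemma Or_uniq': "(u,w) \<in> Or \<Longrightarrow> (w,u) \<in> Or \<Longrightarrow> False"
proof -
  assume a: "(u,w) \<in> Or" "(w,u) \<in> Or"
  have "und (u,w) = und (w,u)" unfolding und_def by auto
  hence "(u,w) = (w,u)" using Or_uniq a by blast
  thus False using Or_ne a by auto
qed
lemma Or_ex: "{u,w} \<in> E \<Longrightarrow> (u,w) \<in> Or \<or> (w,u) \<in> Or"
proof -
  assume "{u,w} \<in> E"
  then obtain p where "p \<in> Or" "und p = {u,w}" using ori unfolding orientation_def by metis
  thus ?thesis unfolding und_def by (cases p) (auto simp: doubleton_eq_iff)
qed
lemma edge_iff: "{u,w} \<in> E \<longleftrightarrow> (u,w) \<in> Or \<or> (w,u) \<in> Or"
  using Or_ex Or_E by (metis insert_commute)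
lemma finOr: "finite Or"
proof -
  have "Or \<subseteq> V \<times> V" using Or_V by auto
  thus ?thesis using finV by (meson finite_SigmaI rev_finite_subset)
qed

lemma tri3: "is_triangle V E {a,b,c} \<longleftrightarrow>
   (a \<noteq> b \<and> b \<noteq> c \<and> a \<noteq> c \<and> {a,b} \<in> E \<and> {b,c} \<in> E \<and> {a,c} \<in> E)"
proof
  assume t: "is_triangle V E {a,b,c}"
  hence "card {a,b,c} = 3" unfolding is_triangle_def by auto
  hence d: "a \<noteq> b \<and> b \<noteq> c \<and> a \<noteq> c" by (auto simp: card_insert_if split: if_splits)
  thus "a \<noteq> b \<and> b \<noteq> c \<and> a \<noteq> c \<and> {a,b} \<in> E \<and> {b,c} \<in> E \<and> {a,c} \<in> E"
    using t unfolding is_triangle_def by auto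
next
  assume r: "a \<noteq> b \<and> b \<noteq> c \<and> a \<noteq> c \<and> {a,b} \<in> E \<and> {b,c} \<in> E \<and> {a,c} \<in> E"
  hence "{a,b,c} \<subseteq> V" using edge_V by auto
  moreover have "card {a,b,c} = 3" using r by auto
  moreover have "\<forall>x\<in>{a,b,c}. \<forall>y\<in>{a,b,c}. x \<noteq> y \<longrightarrow> {x,y} \<in> E"
    using r by (auto simp: insert_commute)
  ultimately show "is_triangle V E {a,b,c}" unfolding is_triangle_def by blast
qed

lemma card3_split:
  assumes "card T = 3" "a \<in> T" "b \<in> T" "a \<noteq> b"
  obtains c where "T = {a,b,c}" "c \<noteq> a" "c \<noteq> b"
proof -
  have fT: "finite T" using assms(1) by (metis card.infinite zero_neq_numeral)
  have "card (T - {a,b}) = 1" using assms fT by (simp add: card_Diff_subset)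
  then obtain c where c: "T - {a,b} = {c}" by (auto simp: card_Suc_eq)
  hence "T = {a,b,c}" using assms by auto
  moreover have "c \<noteq> a" "c \<noteq> b" using c by auto
  ultimately show ?thesis using that by blast
qed

definition Cs :: "'a \<Rightarrow> 'a \<Rightarrow> 'a set" where
  "Cs a b = {c \<in> V. is_triangle V E {a,b,c}}"

lemma Cs_sym: "Cs a b = Cs b a" unfolding Cs_def by (simp add: insert_commute)
lemma Cs_fin: "finite (Cs a b)" unfolding Cs_def using finV by simp
lemma Cs_edge: "c \<in> Cs a b \<Longrightarrow> {a,b} \<in> E \<and> c \<noteq> a \<and> c \<noteq> b \<and> c \<in> V"
  unfolding Cs_def tri3 by auto

lemma tri_card:
  assumes "(a,b) \<in> Or"
  shows "tri V E (und (a,b)) = card (Cs a b)"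
proof -
  have ab: "a \<noteq> b" using Or_ne assms by blast
  have "{T. is_triangle V E T \<and> und (a,b) \<subseteq> T} = (\<lambda>c. {a,b,c}) ` Cs a b"
  proof (rule Set.set_eqI, rule iffI)
    fix T assume "T \<in> {T. is_triangle V E T \<and> und (a,b) \<subseteq> T}"
    hence T: "is_triangle V E T" "a \<in> T" "b \<in> T" unfolding und_def by auto
    then obtain c where c: "T = {a,b,c}" "c \<noteq> a" "c \<noteq> b"
      using card3_split[of T a b] ab unfolding is_triangle_def by blast
    hence "c \<in> V" using T unfolding is_triangle_def by auto
    thus "T \<in> (\<lambda>c. {a,b,c}) ` Cs a b" using c T unfolding Cs_def by auto
  next
    fix T assume "T \<in> (\<lambda>c. {a,b,c}) ` Cs a b"
    thus "T \<in> {T. is_triangle V E T \<and> und (a,b) \<subseteq> T}" unfolding Cs_def und_def by auto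
  qed
  moreover have "inj_on (\<lambda>c. {a,b,c}) (Cs a b)"
  proof
    fix c c' assume "c \<in> Cs a b" "c' \<in> Cs a b" "{a,b,c} = {a,b,c'}"
    thus "c = c'" using Cs_edge by (metis insertE insertI1 insert_commute singletonD)
  qed
  ultimately show ?thesis unfolding tri_def by (simp add: card_image)
qed

definition Xf :: "('a \<times> 'a \<Rightarrow> real) \<Rightarrow> 'a \<Rightarrow> 'a \<Rightarrow> real" where
  "Xf x u w = (if (u,w) \<in> Or then x (u,w) else if (w,u) \<in> Or then - x (w,u) else 0)"

lemma Xf_anti: "Xf x u w = - Xf x w u"
  unfolding Xf_def using Or_uniq' by auto

lemma Xf_self: "Xf x u u = 0" using Xf_anti[of x u u] by simp

lemma Xf_nonedge: "{u,w} \<notin> E \<Longrightarrow> Xf x u w = 0"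
  unfolding Xf_def using edge_iff[of u w] by auto

definition Dv :: "('a \<times> 'a \<Rightarrow> real) \<Rightarrow> 'a \<Rightarrow> real" where
  "Dv x v = (\<Sum>u\<in>V. Xf x u v)"

definition curl :: "('a \<times> 'a \<Rightarrow> real) \<Rightarrow> 'a \<Rightarrow> 'a \<Rightarrow> 'a \<Rightarrow> real" where
  "curl x a b c = Xf x a b + Xf x b c + Xf x c a"

definition Hx :: "('a \<times> 'a \<Rightarrow> real) \<Rightarrow> 'a \<times> 'a \<Rightarrow> real" where
  "Hx x e = (\<Sum>e'\<in>Or. helmholtzian V E e e' * x e')"

definition oth :: "'a \<Rightarrow> 'a \<times> 'a \<Rightarrow> 'a" where
  "oth b e = (if fst e = b then snd e else fst e)"

lemma oth_und: "e \<in> Or \<Longrightarrow> b \<in> und e \<Longrightarrow> und e = {oth b e, b} \<and> oth b e \<noteq> b"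
  unfolding oth_def und_def using Or_ne by (cases e) auto

lemma sum_nbr:
  assumes e: "e \<in> Or" "und e = {a,b}"
  shows "(\<Sum>e'\<in>{e'\<in>Or. b \<in> und e'} - {e}. g (oth b e')) = (\<Sum>u\<in>{u\<in>V. {u,b} \<in> E} - {a}. g u)"
proof (rule sum.reindex_bij_betw)
  show "bij_betw (oth b) ({e'\<in>Or. b \<in> und e'} - {e}) ({u\<in>V. {u,b} \<in> E} - {a})"
    unfolding bij_betw_def
  proof (intro conjI)
    show "inj_on (oth b) ({e'\<in>Or. b \<in> und e'} - {e})"
    proof
      fix e1 e2 assume "e1 \<in> {e'\<in>Or. b \<in> und e'} - {e}" "e2 \<in> {e'\<in>Or. b \<in> und e'} - {e}"
        "oth b e1 = oth b e2"
      thus "e1 = e2" using oth_und Or_uniq by (metis (no_types, lifting) DiffD1 mem_Collect_eq)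
    qed
    show "oth b ` ({e'\<in>Or. b \<in> und e'} - {e}) = {u\<in>V. {u,b} \<in> E} - {a}"
    proof (rule Set.set_eqI, rule iffI)
      fix u assume "u \<in> oth b ` ({e'\<in>Or. b \<in> und e'} - {e})"
      then obtain e' where e': "e' \<in> Or" "b \<in> und e'" "e' \<noteq> e" "u = oth b e'" by auto
      hence ue: "und e' = {u,b}" "u \<noteq> b" using oth_und by auto
      hence "{u,b} \<in> E" using e' ori unfolding orientation_def by auto
      moreover have "u \<noteq> a" using ue e e' Or_uniq by metis
      ultimately show "u \<in> {u\<in>V. {u,b} \<in> E} - {a}" using edge_V by auto
    next
      fix u assume u: "u \<in> {u\<in>V. {u,b} \<in> E} - {a}"
      hence ub: "u \<noteq> b" using edge_ne by auto
      from u obtain p where p: "p \<in> Or" "und p = {u,b}" using ori unfolding orientation_def by force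
      have "b \<in> und p" using p by auto
      moreover have "p \<noteq> e"
      proof
        assume "p = e"
        hence "{u,b} = {a,b}" using p e by simp
        thus False using u ub by (auto simp: doubleton_eq_iff)
      qed
      moreover have "oth b p = u" using oth_und[OF p(1) \<open>b \<in> und p\<close>] p ub by (auto simp: doubleton_eq_iff)
      ultimately show "u \<in> oth b ` ({e'\<in>Or. b \<in> und e'} - {e})" using p by force
    qed
  qed
qed


lemma ctri_iff:
  assumes ab: "(a,b) \<in> Or" and u: "u \<in> V" "u \<noteq> a" "u \<noteq> b"
    and e': "und e' = {u,b} \<or> und e' = {a,u}"
  shows "in_common_triangle V E (a,b) e' \<longleftrightarrow> u \<in> Cs a b"
proof
  assume "in_common_triangle V E (a,b) e'"
  then obtain T where T: "is_triangle V E T" "und (a,b) \<subseteq> T" "und e' \<subseteq> T"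
    unfolding in_common_triangle_def by blast
  have "a \<noteq> b" using Or_ne ab by blast
  then obtain c where c: "T = {a,b,c}" "c \<noteq> a" "c \<noteq> b"
    using card3_split[of T a b] T unfolding is_triangle_def und_def by auto
  have "u \<in> T" using T(3) e' by auto
  hence "u = c" using c u by auto
  thus "u \<in> Cs a b" using T c u unfolding Cs_def by auto
next
  assume "u \<in> Cs a b"
  hence "is_triangle V E {a,b,u}" unfolding Cs_def by auto
  moreover have "und (a,b) \<subseteq> {a,b,u}" "und e' \<subseteq> {a,b,u}" using e' unfolding und_def by auto
  ultimately show "in_common_triangle V E (a,b) e'" unfolding in_common_triangle_def by blast
qed

lemma H_entry_b:
  assumes ab: "(a,b) \<in> Or" and e': "e' \<in> Or" "b \<in> und e'" "e' \<noteq> (a,b)"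
  shows "helmholtzian V E (a,b) e' * x e' = (if oth b e' \<in> Cs a b then 0 else Xf x (oth b e') b)"
proof -
  define u where "u = oth b e'"
  have ue: "und e' = {u,b}" "u \<noteq> b" using oth_und[OF e'(1,2)] u_def by auto
  have ua: "u \<noteq> a"
  proof
    assume "u = a"
    hence "und e' = und (a,b)" using ue unfolding und_def by auto
    thus False using Or_uniq ab e' by blast
  qed
  have uV: "u \<in> V" using ue Or_und[OF e'(1)] edge_V by auto
  have ct: "in_common_triangle V E (a,b) e' \<longleftrightarrow> u \<in> Cs a b"
    using ctri_iff[OF ab uV ua ue(2)] ue by blast
  have "e' = (b,u) \<or> e' = (u,b)" using ue unfolding und_def by (cases e') (auto simp: doubleton_eq_iff)
  thus ?thesis
  proof
    assume eq: "e' = (b,u)"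
    have nO: "(u,b) \<notin> Or" using Or_uniq' e' eq by blast
    have ne: "(a,b) \<noteq> e'" using e' by auto
    have ht: "head_tail (a,b) e'" using eq by (simp add: head_tail_def)
    have H: "helmholtzian V E (a,b) e' = (if u \<in> Cs a b then 0 else -1)"
      unfolding helmholtzian_def using ne ht ct by simp
    have X: "Xf x u b = - x e'" using nO eq e'(1) by (simp add: Xf_def)
    show ?thesis unfolding u_def[symmetric] H X by simp
  next
    assume eq: "e' = (u,b)"
    have ne: "(a,b) \<noteq> e'" using e' by auto
    have ht: "\<not> head_tail (a,b) e'" using eq ue(2) Or_ne[OF ab] by (auto simp: head_tail_def)
    have se: "same_end (a,b) e'" using eq by (simp add: same_end_def)
    have H: "helmholtzian V E (a,b) e' = (if u \<in> Cs a b then 0 else 1)"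
      unfolding helmholtzian_def using ne ht se ct by simp
    have X: "Xf x u b = x e'" using eq e'(1) by (simp add: Xf_def)
    show ?thesis unfolding u_def[symmetric] H X by simp
  qed
qed

lemma H_entry_a:
  assumes ab: "(a,b) \<in> Or" and e': "e' \<in> Or" "a \<in> und e'" "e' \<noteq> (a,b)"
  shows "helmholtzian V E (a,b) e' * x e' = (if oth a e' \<in> Cs a b then 0 else Xf x a (oth a e'))"
proof -
  define u where "u = oth a e'"
  have ue: "und e' = {u,a}" "u \<noteq> a" using oth_und[OF e'(1,2)] u_def by auto
  have ub: "u \<noteq> b"
  proof
    assume "u = b"
    hence "und e' = und (a,b)" using ue unfolding und_def by auto
    thus False using Or_uniq ab e' by blast
  qed
  have uV: "u \<in> V" using ue Or_und[OF e'(1)] edge_V by auto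
  have ct: "in_common_triangle V E (a,b) e' \<longleftrightarrow> u \<in> Cs a b"
    using ctri_iff[OF ab uV ue(2) ub] ue by (auto simp: insert_commute)
  have "e' = (a,u) \<or> e' = (u,a)" using ue unfolding und_def by (cases e') (auto simp: doubleton_eq_iff)
  thus ?thesis
  proof
    assume eq: "e' = (a,u)"
    have ne: "(a,b) \<noteq> e'" using e' by auto
    have ht: "\<not> head_tail (a,b) e'" using eq ub ue(2) Or_ne[OF ab] by (auto simp: head_tail_def)
    have se: "same_end (a,b) e'" using eq by (simp add: same_end_def)
    have H: "helmholtzian V E (a,b) e' = (if u \<in> Cs a b then 0 else 1)"
      unfolding helmholtzian_def using ne ht se ct by simp
    have X: "Xf x a u = x e'" using eq e'(1) by (simp add: Xf_def)
    show ?thesis unfolding u_def[symmetric] H X by simp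
  next
    assume eq: "e' = (u,a)"
    have nO: "(a,u) \<notin> Or" using Or_uniq' e' eq by blast
    have ne: "(a,b) \<noteq> e'" using e' by auto
    have ht: "head_tail (a,b) e'" using eq by (simp add: head_tail_def)
    have H: "helmholtzian V E (a,b) e' = (if u \<in> Cs a b then 0 else -1)"
      unfolding helmholtzian_def using ne ht ct by simp
    have X: "Xf x a u = - x e'" using nO eq e'(1) by (simp add: Xf_def)
    show ?thesis unfolding u_def[symmetric] H X by simp
  qed
qed

lemma H_entry_0:
  assumes e': "e' \<in> Or" "a \<notin> und e'" "b \<notin> und e'" "e' \<noteq> (a,b)"
  shows "helmholtzian V E (a,b) e' = 0"
proof -
  have "\<not> head_tail (a,b) e'" "\<not> same_end (a,b) e'"
    using assms unfolding head_tail_def same_end_def und_def by (cases e', auto)+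
  thus ?thesis using assms(4) unfolding helmholtzian_def by auto
qed

lemma S1:
  assumes ab: "(a,b) \<in> Or"
  shows "Hx x (a,b) = Dv x b - Dv x a + (\<Sum>c\<in>Cs a b. curl x a b c)"
proof -
  define e where "e = (a,b)"
  define C where "C = Cs a b"
  define f where "f e' = helmholtzian V E e e' * x e'" for e'
  define Nb where "Nb = {e'\<in>Or. b \<in> und e'} - {e}"
  define Na where "Na = {e'\<in>Or. a \<in> und e'} - {e}"
  define gb where "gb u = (if u \<in> C then 0 else Xf x u b)" for u
  define ga where "ga u = (if u \<in> C then 0 else Xf x a u)" for u
  have abne: "a \<noteq> b" using Or_ne ab by blast
  have aV: "a \<in> V" and bV: "b \<in> V" using Or_V ab by auto
  have fin: "finite Nb" "finite Na" using finOr unfolding Nb_def Na_def by auto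
  have CV: "C \<subseteq> V - {a}" "C \<subseteq> V - {b}" using Cs_edge unfolding C_def by auto
  have finC: "finite C" unfolding C_def by (rule Cs_fin)
  have "Hx x e = f e + (\<Sum>e'\<in>Or - {e}. f e')"
    unfolding Hx_def f_def using finOr ab e_def by (simp add: sum.remove)
  also have "(\<Sum>e'\<in>Or - {e}. f e') = (\<Sum>e'\<in>Nb \<union> Na. f e')"
  proof (rule sum.mono_neutral_right)
    show "finite (Or - {e})" using finOr by simp
    show "Nb \<union> Na \<subseteq> Or - {e}" unfolding Nb_def Na_def by auto
    show "\<forall>i\<in>Or - {e} - (Nb \<union> Na). f i = 0"
      unfolding f_def Nb_def Na_def e_def using H_entry_0 by auto
  qed
  also have "\<dots> = (\<Sum>e'\<in>Nb. f e') + (\<Sum>e'\<in>Na. f e')"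
  proof (rule sum.union_disjoint[OF fin])
    show "Nb \<inter> Na = {}"
    proof (rule ccontr)
      assume "Nb \<inter> Na \<noteq> {}"
      then obtain e' where e': "e' \<in> Or" "a \<in> und e'" "b \<in> und e'" "e' \<noteq> e"
        unfolding Nb_def Na_def by auto
      have "card (und e') = 2" using e' ori E_card unfolding orientation_def by blast
      hence "und e' = {a,b}" using e' abne unfolding und_def
        by (cases e') (auto simp: card_insert_if split: if_splits)
      hence "und e' = und e" unfolding e_def und_def by simp
      thus False using Or_uniq e' ab e_def by blast
    qed
  qed
  also have "(\<Sum>e'\<in>Nb. f e') = (\<Sum>e'\<in>Nb. gb (oth b e'))"
    unfolding Nb_def f_def gb_def C_def e_def using H_entry_b[OF ab] by (intro sum.cong) auto
  also have "\<dots> = (\<Sum>u\<in>{u\<in>V. {u,b} \<in> E} - {a}. gb u)"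
    unfolding Nb_def by (rule sum_nbr) (simp_all add: ab e_def und_def)
  also have "\<dots> = (\<Sum>u\<in>V - {a}. gb u)"
    by (rule sum.mono_neutral_left) (use finV Xf_nonedge gb_def in auto)
  also have "(\<Sum>e'\<in>Na. f e') = (\<Sum>e'\<in>Na. ga (oth a e'))"
    unfolding Na_def f_def ga_def C_def e_def using H_entry_a[OF ab] by (intro sum.cong) auto
  also have "\<dots> = (\<Sum>u\<in>{u\<in>V. {u,a} \<in> E} - {b}. ga u)"
    unfolding Na_def by (rule sum_nbr) (simp_all add: ab e_def und_def insert_commute)
  also have "\<dots> = (\<Sum>u\<in>V - {b}. ga u)"
  proof (rule sum.mono_neutral_left)
    show "\<forall>i\<in>V - {b} - ({u \<in> V. {u, a} \<in> E} - {b}). ga i = 0"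
      using Xf_nonedge[of a _ x] unfolding ga_def by (auto simp: insert_commute)
  qed (use finV in auto)
  finally have H1: "Hx x e = f e + (\<Sum>u\<in>V - {a}. gb u) + (\<Sum>u\<in>V - {b}. ga u)" by simp
  have fe: "f e = real (card C) * x e + 2 * x e"
    unfolding f_def C_def e_def helmholtzian_def using tri_card[OF ab] by (simp add: algebra_simps)
  have sb: "(\<Sum>u\<in>V - {a}. Xf x u b) = (\<Sum>u\<in>V - {a}. gb u) + (\<Sum>u\<in>C. Xf x u b)"
  proof -
    have "(\<Sum>u\<in>V - {a}. Xf x u b) = (\<Sum>u\<in>V - {a}. gb u + (if u \<in> C then Xf x u b else 0))"
      unfolding gb_def by (rule sum.cong) auto
    also have "\<dots> = (\<Sum>u\<in>V - {a}. gb u) + (\<Sum>u\<in>(V - {a}) \<inter> C. Xf x u b)"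
      using finV by (simp add: sum.distrib sum.inter_restrict)
    also have "(V - {a}) \<inter> C = C" using CV by auto
    finally show ?thesis .
  qed
  have sa: "(\<Sum>u\<in>V - {b}. Xf x a u) = (\<Sum>u\<in>V - {b}. ga u) + (\<Sum>u\<in>C. Xf x a u)"
  proof -
    have "(\<Sum>u\<in>V - {b}. Xf x a u) = (\<Sum>u\<in>V - {b}. ga u + (if u \<in> C then Xf x a u else 0))"
      unfolding ga_def by (rule sum.cong) auto
    also have "\<dots> = (\<Sum>u\<in>V - {b}. ga u) + (\<Sum>u\<in>(V - {b}) \<inter> C. Xf x a u)"
      using finV by (simp add: sum.distrib sum.inter_restrict)
    also have "(V - {b}) \<inter> C = C" using CV by auto
    finally show ?thesis .
  qed
  have Db: "Dv x b = Xf x a b + (\<Sum>u\<in>V - {a}. Xf x u b)"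
    unfolding Dv_def using finV aV by (simp add: sum.remove)
  have Da: "Dv x a = Xf x b a + (\<Sum>u\<in>V - {b}. Xf x u a)"
    unfolding Dv_def using finV bV by (simp add: sum.remove)
  have Da': "(\<Sum>u\<in>V - {b}. Xf x u a) = - (\<Sum>u\<in>V - {b}. Xf x a u)"
    by (subst Xf_anti) (simp add: sum_negf)
  have xab: "Xf x a b = x e" "Xf x b a = - x e" unfolding e_def using Xf_anti[of x b a] ab
    by (auto simp: Xf_def)
  have curl: "(\<Sum>c\<in>C. curl x a b c) = real (card C) * x e - (\<Sum>u\<in>C. Xf x u b) - (\<Sum>u\<in>C. Xf x a u)"
  proof -
    have "(\<Sum>c\<in>C. curl x a b c) = (\<Sum>c\<in>C. x e - Xf x c b - Xf x a c)"
    proof (rule sum.cong[OF refl])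
      fix c show "curl x a b c = x e - Xf x c b - Xf x a c"
        unfolding curl_def using xab(1) Xf_anti[of x b c] Xf_anti[of x c a] by simp
    qed
    thus ?thesis by (simp add: sum_subtractf)
  qed
  show ?thesis
    unfolding e_def[symmetric] C_def[symmetric]
    using H1 fe sb sa Db Da Da' xab curl by linarith
qed


lemma Cs_empty: "{u,v} \<notin> E \<Longrightarrow> Cs u v = {}"
  using Cs_edge by blast

lemma curl_anti: "curl x v u c = - curl x u v c"
  unfolding curl_def using Xf_anti[of x v u] Xf_anti[of x u c] Xf_anti[of x c v] by simp

lemma S1':
  assumes "u \<in> V" "v \<in> V"
  shows "Xf (Hx x) u v = (if {u,v} \<in> E then Dv x v - Dv x u else 0) + (\<Sum>c\<in>Cs u v. curl x u v c)"
proof (cases "(u,v) \<in> Or")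
  case True
  thus ?thesis using S1[OF True] Or_E[OF True] by (simp add: Xf_def)
next
  case False
  show ?thesis
  proof (cases "(v,u) \<in> Or")
    case True
    have "Xf (Hx x) u v = - Hx x (v,u)" using True False by (simp add: Xf_def)
    also have "\<dots> = Dv x v - Dv x u + (\<Sum>c\<in>Cs u v. curl x u v c)"
      unfolding S1[OF True] Cs_sym[of v u] curl_anti[of x v u]
      by (simp add: sum_negf)
    finally show ?thesis using Or_E[OF True] by (simp add: insert_commute)
  next
    case F2: False
    have "{u,v} \<notin> E" using edge_iff False F2 by blast
    thus ?thesis using False F2 Cs_empty by (simp add: Xf_def)
  qed
qed

lemma curl_zero:
  "(\<Sum>u\<in>V. \<Sum>c\<in>Cs u v. curl x u v c) = 0"
proof -
  define P where "P = Sigma V (\<lambda>u. Cs u v)"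
  have finP: "finite P" unfolding P_def using finV Cs_fin by auto
  have S: "(\<Sum>u\<in>V. \<Sum>c\<in>Cs u v. curl x u v c) = (\<Sum>(u,c)\<in>P. curl x u v c)"
    unfolding P_def using finV Cs_fin by (simp add: sum.Sigma)
  have memP: "(c,u) \<in> P" if "(u,c) \<in> P" for u c
  proof -
    have "c \<in> V" "is_triangle V E {u,v,c}" "u \<in> V" using that unfolding P_def Cs_def by auto
    moreover have "{c,v,u} = {u,v,c}" by auto
    ultimately show ?thesis unfolding P_def Cs_def by auto
  qed
  have img: "prod.swap ` P = P"
  proof
    show "prod.swap ` P \<subseteq> P" using memP by auto
    show "P \<subseteq> prod.swap ` P"
    proof
      fix p assume "p \<in> P"
      then obtain u c where p: "p = (u,c)" "(u,c) \<in> P" by (cases p) auto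
      have "(c,u) \<in> P" using p(2) by (rule memP)
      thus "p \<in> prod.swap ` P" using p by (auto intro: image_eqI[of _ _ "(c,u)"])
    qed
  qed
  have "(\<Sum>(u,c)\<in>P. curl x u v c) = (\<Sum>(u,c)\<in>prod.swap ` P. curl x u v c)" using img by simp
  also have "\<dots> = (\<Sum>(u,c)\<in>P. curl x c v u)"
    by (subst sum.reindex) (auto simp: case_prod_unfold)
  also have "\<dots> = - (\<Sum>(u,c)\<in>P. curl x u v c)"
  proof -
    have "(\<Sum>(u,c)\<in>P. curl x c v u) = (\<Sum>(u,c)\<in>P. - curl x u v c)"
    proof (rule sum.cong[OF refl])
      fix p show "(case p of (u,c) \<Rightarrow> curl x c v u) = (case p of (u,c) \<Rightarrow> - curl x u v c)"
        unfolding curl_def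
        using Xf_anti[of x "snd p" v] Xf_anti[of x v "fst p"] Xf_anti[of x "fst p" "snd p"]
        by (simp add: case_prod_unfold)
    qed
    thus ?thesis by (simp add: case_prod_unfold sum_negf)
  qed
  finally have "(\<Sum>(u,c)\<in>P. curl x u v c) = 0" by simp
  thus ?thesis using S by simp
qed

lemma degree_eq: "v \<in> V \<Longrightarrow> Defs.degree E v = card {u\<in>V. {u,v} \<in> E}"
proof -
  assume vV: "v \<in> V"
  have "{e\<in>E. v \<in> e} = (\<lambda>u. {u,v}) ` {u\<in>V. {u,v} \<in> E}"
  proof (rule Set.set_eqI, rule iffI)
    fix e assume e: "e \<in> {e\<in>E. v \<in> e}"
    hence "card e = 2" using E_card by auto
    then obtain p q where pq: "e = {p,q}" "p \<noteq> q" by (auto simp: card_2_iff)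
    hence "\<exists>u. e = {u,v}" using e by auto
    then obtain u where "e = {u,v}" by blast
    thus "e \<in> (\<lambda>u. {u,v}) ` {u\<in>V. {u,v} \<in> E}" using e edge_V by auto
  qed auto
  moreover have "inj_on (\<lambda>u. {u,v}) {u\<in>V. {u,v} \<in> E}"
  proof
    fix u u' assume "u \<in> {u\<in>V. {u,v} \<in> E}" "u' \<in> {u\<in>V. {u,v} \<in> E}" "{u,v} = {u',v}"
    thus "u = u'" using edge_ne by (auto simp: doubleton_eq_iff)
  qed
  ultimately show ?thesis unfolding Defs.degree_def by (simp add: card_image)
qed

lemma lap:
  assumes vV: "v \<in> V"
  shows "(\<Sum>u\<in>V. laplacian E v u * D u) = (\<Sum>u\<in>V. if {u,v} \<in> E then D v - D u else 0)"
proof -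
  define W where "W = {u\<in>V. {u,v} \<in> E}"
  have finW: "finite W" unfolding W_def using finV by auto
  have vW: "v \<notin> W" unfolding W_def using single_notE by auto
  have "(\<Sum>u\<in>V. laplacian E v u * D u) = laplacian E v v * D v + (\<Sum>u\<in>V - {v}. laplacian E v u * D u)"
    using finV vV by (simp add: sum.remove)
  also have "(\<Sum>u\<in>V - {v}. laplacian E v u * D u) = (\<Sum>u\<in>V - {v}. if u \<in> W then - D u else 0)"
    unfolding laplacian_def W_def by (rule sum.cong) (auto simp: insert_commute single_notE)
  also have "\<dots> = (\<Sum>u\<in>(V - {v}) \<inter> W. - D u)" using finV by (simp add: sum.inter_restrict)
  also have "(V - {v}) \<inter> W = W" unfolding W_def using vW W_def by auto
  also have "laplacian E v v = real (card W)" unfolding laplacian_def W_def using degree_eq[OF vV] by simp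
  finally have L: "(\<Sum>u\<in>V. laplacian E v u * D u) = real (card W) * D v - (\<Sum>u\<in>W. D u)"
    by (simp add: sum_negf)
  have "(\<Sum>u\<in>V. if {u,v} \<in> E then D v - D u else 0) = (\<Sum>u\<in>V. if u \<in> W then D v - D u else 0)"
    by (rule sum.cong) (auto simp: W_def)
  also have "\<dots> = (\<Sum>u\<in>V \<inter> W. D v - D u)" by (rule sum.inter_restrict[OF finV, symmetric])
  also have "V \<inter> W = W" unfolding W_def by auto
  also have "(\<Sum>u\<in>W. D v - D u) = real (card W) * D v - (\<Sum>u\<in>W. D u)"
    by (simp add: sum_subtractf)
  finally show ?thesis using L by simp
qed

lemma Xf_scale: "(\<And>e. e \<in> Or \<Longrightarrow> y e = c * x e) \<Longrightarrow> Xf y u w = c * Xf x u w"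
  unfolding Xf_def by auto

lemma Xf_bound: "(\<And>e. e \<in> Or \<Longrightarrow> \<bar>x e\<bar> \<le> m) \<Longrightarrow> 0 \<le> m \<Longrightarrow> \<bar>Xf x u w\<bar> \<le> m"
  unfolding Xf_def by auto

lemma H_sym: "helmholtzian V E e e' = helmholtzian V E e' e"
proof -
  have "head_tail e e' = head_tail e' e" unfolding head_tail_def by blast
  moreover have "same_end e e' = same_end e' e" unfolding same_end_def by auto
  moreover have "in_common_triangle V E e e' = in_common_triangle V E e' e"
    unfolding in_common_triangle_def by blast
  ultimately show ?thesis unfolding helmholtzian_def by simp
qed

end

theorem corollary5p3:
  fixes V :: "'a set" and E :: "'a set set" and Or :: "('a \<times> 'a) set"
  assumes "simple_graph V E"
    and "E \<noteq> {}"
    and "orientation E Or"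
  shows "largest_eigenvalue Or (helmholtzian V E)
         \<le> max (largest_eigenvalue V (laplacian E))
                (3 * real (Max ((tri V E) ` E)))"
proof -
  interpret hg V E Or using assms(1,3) by unfold_locales
  define SH where "SH = {lam. eigenvalue_on Or (helmholtzian V E) lam}"
  define SL where "SL = {lam. eigenvalue_on V (laplacian E) lam}"
  define T where "T = 3 * real (Max (tri V E ` E))"
  have finSH: "finite SH" unfolding SH_def eigenvalue_on_ev_gen by (rule ev_finite[OF finOr])
  have finSL: "finite SL" unfolding SL_def eigenvalue_on_ev_gen by (rule ev_finite[OF finV])
  have OrNE: "Or \<noteq> {}"
  proof -
    obtain e where "e \<in> E" using assms(2) by blast
    then obtain p where "p \<in> Or" using ori unfolding orientation_def by blast
    thus ?thesis by blast
  qed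
  have "SH \<noteq> {}" unfolding SH_def using ev_exists[OF finOr OrNE] H_sym by blast
  define lam where "lam = Max SH"
  have "lam \<in> SH" unfolding lam_def using finSH \<open>SH \<noteq> {}\<close> by (rule Max_in)
  then obtain x where x1: "\<exists>e\<in>Or. x e \<noteq> 0"
    and x2: "\<And>e. e \<in> Or \<Longrightarrow> Hx x e = lam * x e"
    unfolding SH_def eigenvalue_on_def Hx_def by blast
  have main: "lam \<le> max (Max SL) T"
  proof (cases "\<forall>v\<in>V. Dv x v = 0")
    case True
    define m where "m = Max ((\<lambda>e. \<bar>x e\<bar>) ` Or)"
    have mge: "\<bar>x e\<bar> \<le> m" if "e \<in> Or" for e
      unfolding m_def using finOr that by auto
    have "m \<in> (\<lambda>e. \<bar>x e\<bar>) ` Or" unfolding m_def using finOr OrNE by (intro Max_in) auto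
    then obtain e0 where e0: "e0 \<in> Or" "\<bar>x e0\<bar> = m" by auto
    have mpos: "m > 0"
    proof -
      obtain e where "e \<in> Or" "x e \<noteq> 0" using x1 by blast
      thus ?thesis using mge[of e] by auto
    qed
    obtain a b where ab: "e0 = (a,b)" by (cases e0)
    have abO: "(a,b) \<in> Or" using e0 ab by simp
    define C where "C = Cs a b"
    have aV: "a \<in> V" and bV: "b \<in> V" using Or_V abO by auto
    have "lam * x e0 = Hx x (a,b)" using x2 e0 ab by simp
    also have "\<dots> = (\<Sum>c\<in>C. curl x a b c)" unfolding S1[OF abO] C_def using True aV bV by simp
    also have "\<dots> = (\<Sum>c\<in>C. x e0 + (Xf x b c + Xf x c a))"
      unfolding curl_def using abO ab by (intro sum.cong) (simp_all add: Xf_def)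
    also have "\<dots> = real (card C) * x e0 + (\<Sum>c\<in>C. Xf x b c + Xf x c a)"
      by (simp add: sum.distrib)
    finally have eq: "(lam - real (card C)) * x e0 = (\<Sum>c\<in>C. Xf x b c + Xf x c a)"
      by (simp add: algebra_simps)
    have m0: "0 \<le> m" using mpos by simp
    have "\<bar>lam - real (card C)\<bar> * m = \<bar>(lam - real (card C)) * x e0\<bar>"
      using e0 by (simp add: abs_mult)
    also have "\<dots> = \<bar>(\<Sum>c\<in>C. Xf x b c + Xf x c a)\<bar>" by (simp only: eq)
    also have "\<dots> \<le> (\<Sum>c\<in>C. \<bar>Xf x b c + Xf x c a\<bar>)" by (rule sum_abs)
    also have "\<dots> \<le> (\<Sum>c\<in>C. 2 * m)"
    proof (rule sum_mono)
      fix c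
      have "\<bar>Xf x b c\<bar> \<le> m" "\<bar>Xf x c a\<bar> \<le> m" using Xf_bound[OF mge m0] by auto
      thus "\<bar>Xf x b c + Xf x c a\<bar> \<le> 2 * m" by linarith
    qed
    also have "\<dots> = real (card C) * 2 * m" by simp
    finally have "\<bar>lam - real (card C)\<bar> * m \<le> (real (card C) * 2) * m" by simp
    hence "\<bar>lam - real (card C)\<bar> \<le> real (card C) * 2" using mpos by simp
    hence l3: "lam \<le> 3 * real (card C)" by linarith
    have "card C = tri V E (und (a,b))" unfolding C_def using tri_card[OF abO] by simp
    also have "\<dots> \<le> Max (tri V E ` E)" using Or_und[OF abO] finE by auto
    finally have "3 * real (card C) \<le> T" unfolding T_def by simp
    thus ?thesis using l3 by linarith
  next
    case False
    then obtain v0 where v0: "v0 \<in> V" "Dv x v0 \<noteq> 0" by blast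
    have "eigenvalue_on V (laplacian E) lam"
      unfolding eigenvalue_on_def
    proof (intro exI[of _ "Dv x"] conjI ballI)
      show "\<exists>v\<in>V. Dv x v \<noteq> 0" using v0 by blast
    next
      fix v assume vV: "v \<in> V"
      have "(\<Sum>u\<in>V. laplacian E v u * Dv x u) = (\<Sum>u\<in>V. if {u,v} \<in> E then Dv x v - Dv x u else 0)"
        by (rule lap[OF vV])
      also have "\<dots> = (\<Sum>u\<in>V. Xf (Hx x) u v - (\<Sum>c\<in>Cs u v. curl x u v c))"
        using S1' vV by (intro sum.cong) auto
      also have "\<dots> = (\<Sum>u\<in>V. Xf (Hx x) u v)"
        using curl_zero[of x v] by (simp add: sum_subtractf)
      also have "\<dots> = (\<Sum>u\<in>V. lam * Xf x u v)"
        by (intro sum.cong refl Xf_scale) (rule x2)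
      also have "\<dots> = lam * Dv x v" unfolding Dv_def by (simp add: sum_distrib_left)
      finally show "(\<Sum>u\<in>V. laplacian E v u * Dv x u) = lam * Dv x v" .
    qed
    hence "lam \<in> SL" unfolding SL_def by simp
    hence "lam \<le> Max SL" using finSL by simp
    thus ?thesis by simp
  qed
  show ?thesis using main unfolding largest_eigenvalue_def SH_def[symmetric] SL_def[symmetric]
    lam_def[symmetric] T_def[symmetric] .
qed

end
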